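(* Let $p\colon X\to B$ be a Boolean set. If $G$ is a proper filter in $(X,\le)$ then $p(G)$ is a proper filter in $B$.
   Context: Convention: a "Boolean algebra" means a generalized Boolean algebra (relatively complemented distributive lattice with $0$). Presheaf of sets over a meet semilattice $E$: pairwise disjoint sets $X_e$, restriction maps $x\mapsto x|^e_f$ for $e\ge f$ with $|^e_e=\mathrm{id}$ and $(x|^e_f)|^f_g=x|^e_g$; $p(x)=e$ iff $x\in X_e$; global support: all $X_e\neq\emptyset$. Order: $x\le y$ iff $p(x)\le p(y)$ and $x=y|^{p(y)}_{p(x)}$. Compatibility $x\sim y$: $x\wedge y$ exists and $p(x\wedge y)=p(x)\wedge p(y)$. A Boolean set is a presheaf $p\colon X\to B$ with global support over a Boolean algebra $B$ such that $(X,\le)$ has least element $0$, compatible pairs have joins, and $p(x)=0\Rightarrow x=0$. In a poset, a filter is a non-empty subset $F$ that is down directed ($a,b\in F$ implies some $c\in F$ with $c\le a,b$) and upwardly closed; it is proper if it is not the whole poset. *)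

theory Defs
  imports Main
begin

class gen_boolean_algebra = distrib_lattice + order_bot +
  assumes rel_compl: "a \<le> b \<Longrightarrow> \<exists>c. inf a c = bot \<and> sup a c = b"

text \<open>The elements are the carrier X; the sets X_e are
the fibres of p (hence pairwise disjoint); res x f stands for x|^{p x}_f, for f \<le> p x.\<close>
definition presheaf :: "'x set \<Rightarrow> ('x \<Rightarrow> 'b::semilattice_inf) \<Rightarrow> ('x \<Rightarrow> 'b \<Rightarrow> 'x) \<Rightarrow> bool" where
  "presheaf X p res \<longleftrightarrow>
     (\<forall>x\<in>X. \<forall>f. f \<le> p x \<longrightarrow> res x f \<in> X \<and> p (res x f) = f) \<and>
     (\<forall>x\<in>X. res x (p x) = x) \<and>
     (\<forall>x\<in>X. \<forall>f g. g \<le> f \<and> f \<le> p x \<longrightarrow> res (res x f) g = res x g)"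

definition global_support :: "'x set \<Rightarrow> ('x \<Rightarrow> 'b) \<Rightarrow> bool" where
  "global_support X p \<longleftrightarrow> (\<forall>e. \<exists>x\<in>X. p x = e)"

definition psle :: "('x \<Rightarrow> 'b::order) \<Rightarrow> ('x \<Rightarrow> 'b \<Rightarrow> 'x) \<Rightarrow> 'x \<Rightarrow> 'x \<Rightarrow> bool" where
  "psle p res x y \<longleftrightarrow> p x \<le> p y \<and> x = res y (p x)"

definition is_meet :: "'a set \<Rightarrow> ('a \<Rightarrow> 'a \<Rightarrow> bool) \<Rightarrow> 'a \<Rightarrow> 'a \<Rightarrow> 'a \<Rightarrow> bool" where
  "is_meet A le x y m \<longleftrightarrow> m \<in> A \<and> le m x \<and> le m y \<and>
     (\<forall>z\<in>A. le z x \<and> le z y \<longrightarrow> le z m)"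

definition is_join :: "'a set \<Rightarrow> ('a \<Rightarrow> 'a \<Rightarrow> bool) \<Rightarrow> 'a \<Rightarrow> 'a \<Rightarrow> 'a \<Rightarrow> bool" where
  "is_join A le x y j \<longleftrightarrow> j \<in> A \<and> le x j \<and> le y j \<and>
     (\<forall>z\<in>A. le x z \<and> le y z \<longrightarrow> le j z)"

definition compatible :: "'x set \<Rightarrow> ('x \<Rightarrow> 'b::semilattice_inf) \<Rightarrow> ('x \<Rightarrow> 'b \<Rightarrow> 'x) \<Rightarrow> 'x \<Rightarrow> 'x \<Rightarrow> bool" where
  "compatible X p res x y \<longleftrightarrow>
     (\<exists>m. is_meet X (psle p res) x y m \<and> p m = inf (p x) (p y))"

definition boolean_set :: "'x set \<Rightarrow> ('x \<Rightarrow> 'b::gen_boolean_algebra) \<Rightarrow> ('x \<Rightarrow> 'b \<Rightarrow> 'x) \<Rightarrow> bool" where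
  "boolean_set X p res \<longleftrightarrow>
     presheaf X p res \<and> global_support X p \<and>
     (\<exists>z\<in>X. (\<forall>x\<in>X. psle p res z x) \<and> (\<forall>x\<in>X. p x = bot \<longrightarrow> x = z)) \<and>
     (\<forall>x\<in>X. \<forall>y\<in>X. compatible X p res x y \<longrightarrow> (\<exists>j. is_join X (psle p res) x y j))"

definition is_filter :: "'a set \<Rightarrow> ('a \<Rightarrow> 'a \<Rightarrow> bool) \<Rightarrow> 'a set \<Rightarrow> bool" where
  "is_filter A le F \<longleftrightarrow> F \<subseteq> A \<and> F \<noteq> {} \<and>
     (\<forall>a\<in>F. \<forall>b\<in>F. \<exists>c\<in>F. le c a \<and> le c b) \<and>
     (\<forall>a\<in>F. \<forall>b\<in>A. le a b \<longrightarrow> b \<in> F)"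

definition is_proper_filter :: "'a set \<Rightarrow> ('a \<Rightarrow> 'a \<Rightarrow> bool) \<Rightarrow> 'a set \<Rightarrow> bool" where
  "is_proper_filter A le F \<longleftrightarrow> is_filter A le F \<and> F \<noteq> A"

end

theory Submission
  imports Defs
begin

theorem lemma3p3:
  fixes X :: "'x set" and p :: "'x \<Rightarrow> 'b::gen_boolean_algebra" and res :: "'x \<Rightarrow> 'b \<Rightarrow> 'x"
  assumes "boolean_set X p res"
    and "is_proper_filter X (psle p res) G"
  shows "is_proper_filter (UNIV :: 'b set) (\<le>) (p ` G)"
proof -
  have ps: "presheaf X p res" and gs: "global_support X p"
    and joins: "\<forall>x\<in>X. \<forall>y\<in>X. compatible X p res x y \<longrightarrow> (\<exists>j. is_join X (psle p res) x y j)"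
    using assms(1) unfolding boolean_set_def by auto
  obtain z where zX: "z \<in> X" and zle: "\<forall>x\<in>X. psle p res z x"
    and zb: "\<forall>x\<in>X. p x = bot \<longrightarrow> x = z"
    using assms(1) unfolding boolean_set_def by auto
  have r1: "\<And>x f. x \<in> X \<Longrightarrow> f \<le> p x \<Longrightarrow> res x f \<in> X \<and> p (res x f) = f"
    and r3: "\<And>x f g. x \<in> X \<Longrightarrow> g \<le> f \<Longrightarrow> f \<le> p x \<Longrightarrow> res (res x f) g = res x g"
    using ps unfolding presheaf_def by auto
  have GX: "G \<subseteq> X" and Gne: "G \<noteq> {}"
    and Gdir: "\<forall>a\<in>G. \<forall>b\<in>G. \<exists>c\<in>G. psle p res c a \<and> psle p res c b"
    and Gup: "\<forall>a\<in>G. \<forall>b\<in>X. psle p res a b \<longrightarrow> b \<in> G" and GneX: "G \<noteq> X"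
    using assms(2) unfolding is_proper_filter_def is_filter_def by auto
  obtain x0 where "x0 \<in> X" "p x0 = bot" using gs unfolding global_support_def by blast
  then have pz: "p z = bot" using zle by (metis bot.extremum_uniqueI psle_def)
  have dir: "\<forall>a\<in>p ` G. \<forall>b\<in>p ` G. \<exists>c\<in>p ` G. c \<le> a \<and> c \<le> b"
  proof (intro ballI)
    fix a b assume "a \<in> p ` G" "b \<in> p ` G"
    then obtain x y where "x \<in> G" "y \<in> G" "a = p x" "b = p y" by blast
    then obtain c where "c \<in> G" "psle p res c x" "psle p res c y" using Gdir by blast
    then show "\<exists>c\<in>p ` G. c \<le> a \<and> c \<le> b" using \<open>a = p x\<close> \<open>b = p y\<close>
      unfolding psle_def by blast
  qed
  have up: "\<forall>a\<in>p ` G. \<forall>b\<in>UNIV. a \<le> b \<longrightarrow> b \<in> p ` G"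
  proof (intro ballI impI)
    fix a b assume "a \<in> p ` G" "a \<le> b"
    then obtain x where xG: "x \<in> G" and ax: "a = p x" by blast
    have xX: "x \<in> X" using xG GX by blast
    obtain c where c1: "inf (p x) c = bot" and c2: "sup (p x) c = b"
      using rel_compl[OF \<open>a \<le> b\<close>[unfolded ax]] by blast
    obtain w where wX: "w \<in> X" and pw: "p w = c" using gs unfolding global_support_def by blast
    have meet: "is_meet X (psle p res) x w z"
      unfolding is_meet_def
    proof (intro conjI ballI impI)
      show "z \<in> X" by fact
      show "psle p res z x" using zle xX by blast
      show "psle p res z w" using zle wX by blast
      fix v assume vX: "v \<in> X" and "psle p res v x \<and> psle p res v w"
      then have "p v \<le> p x" "p v \<le> p w" unfolding psle_def by auto
      then have "p v = bot" using c1 pw by (metis le_inf_iff bot.extremum_uniqueI)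
      then have "v = z" using zb vX by blast
      then show "psle p res v z" using zle zX by blast
    qed
    have "compatible X p res x w"
      unfolding compatible_def using meet pz c1 pw by auto
    then obtain j where j: "is_join X (psle p res) x w j" using joins xX wX by blast
    have jX: "j \<in> X" and xj: "psle p res x j" and wj: "psle p res w j"
      and jl: "\<forall>u\<in>X. psle p res x u \<and> psle p res w u \<longrightarrow> psle p res j u"
      using j unfolding is_join_def by auto
    have bpj: "b \<le> p j" using xj wj c2 pw unfolding psle_def by (metis sup_least)
    have pxb: "p x \<le> b" using c2 by (metis sup_ge1)
    have cb: "c \<le> b" using c2 by (metis sup_ge2)
    define u where "u = res j b"
    have uX: "u \<in> X" and pu: "p u = b" using r1[OF jX bpj] u_def by auto
    have "psle p res x u" unfolding psle_def
      using pu pxb r3[OF jX pxb bpj] xj unfolding u_def psle_def by auto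
    moreover have "psle p res w u" unfolding psle_def
      using pu pw cb r3[OF jX cb bpj] wj unfolding u_def psle_def by auto
    ultimately have "psle p res j u" using jl uX by blast
    then have "p j \<le> b" using pu unfolding psle_def by simp
    then have "p j = b" using bpj by simp
    moreover have "j \<in> G" using Gup xG jX xj by blast
    ultimately show "b \<in> p ` G" by blast
  qed
  have notbot: "(bot::'b) \<notin> p ` G"
  proof
    assume "(bot::'b) \<in> p ` G"
    then obtain g where "g \<in> G" "p g = bot" by (metis imageE)
    then have "z \<in> G" using zb GX by blast
    then have "X \<subseteq> G" using Gup zle by blast
    then show False using GX GneX by blast
  qed
  show ?thesis
    unfolding is_proper_filter_def is_filter_def
    using Gne dir up notbot by blast
qed

end
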